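(* Let $G_H$ be a finite undirected multigraph (parallel edges allowed, no self-loops) with vertex set $V$ and edge set partitioned as $E = S \sqcup S^c$ into secure edges $S$ and insecure edges $S^c$, and let $0 < p_J^{S^c} \le p_J^{S} \le p_I$ be real costs satisfying $p_J^{S^c} < p_I/2$ and $p_J^{S} + p_J^{S^c} < p_I$. Give weight $p_J^{S}$ to secure edges and $p_J^{S^c}$ to insecure edges, and let $C^*$ be a cut of minimum weight among cuts containing at least one insecure edge. Then the attack $(C^*, J, I)$ with $I = \{e\}$ for some insecure edge $e \in C^*$ and $J = C^*\setminus \{e\}$ (all other secure and insecure edges of $C^*$ jammed) is an optimal detectable generalized attack in $G_H$.
   Context: For a nonempty proper subset $U \subsetneq V$, the cut $\delta(U)$ is the set of edges with exactly one endpoint in $U$; a cut of $G_H$ is any set of this form. The costs are: $p_J^{S^c}$ per jammed insecure edge, $p_J^S$ per jammed secure edge, $p_I$ per insecure edge with injected data. A generalized attack is a triple $(C,J,I)$ where $C$ is a cut, $J \subseteq C$ is the set of jammed edges, and $I \subseteq (C \cap S^c)\setminus J$ is a nonempty set of injected edges; its cost is $p_J^{S}|J\cap S| + p_J^{S^c}|J \cap S^c| + p_I |I|$. The attack is detectable if $2|I| > |C \setminus J|$ (the injected edges form a strict majority of the non-jammed edges of the cut). An optimal detectable generalized attack is one of minimum cost among all detectable generalized attacks. *)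

theory Defs
  imports Main "HOL.Real"
begin

text \<open>Parallel edges are
  distinct edge identifiers with the same endpoints.\<close>

definition multigraph :: "'v set \<Rightarrow> 'e set \<Rightarrow> ('e \<Rightarrow> 'v) \<Rightarrow> ('e \<Rightarrow> 'v) \<Rightarrow> bool" where
  "multigraph V E src tgt \<longleftrightarrow> finite V \<and> finite E \<and>
     (\<forall>e\<in>E. src e \<in> V \<and> tgt e \<in> V \<and> src e \<noteq> tgt e)"

definition delta :: "'e set \<Rightarrow> ('e \<Rightarrow> 'v) \<Rightarrow> ('e \<Rightarrow> 'v) \<Rightarrow> 'v set \<Rightarrow> 'e set" where
  "delta E src tgt U = {e \<in> E. (src e \<in> U) \<noteq> (tgt e \<in> U)}"

definition is_cut :: "'v set \<Rightarrow> 'e set \<Rightarrow> ('e \<Rightarrow> 'v) \<Rightarrow> ('e \<Rightarrow> 'v) \<Rightarrow> 'e set \<Rightarrow> bool" where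
  "is_cut V E src tgt C \<longleftrightarrow> (\<exists>U. U \<noteq> {} \<and> U \<subset> V \<and> C = delta E src tgt U)"

definition gen_attack ::
  "'v set \<Rightarrow> 'e set \<Rightarrow> ('e \<Rightarrow> 'v) \<Rightarrow> ('e \<Rightarrow> 'v) \<Rightarrow> 'e set \<Rightarrow> 'e set \<Rightarrow> 'e set \<Rightarrow> 'e set \<Rightarrow> bool" where
  "gen_attack V E src tgt S C J I \<longleftrightarrow> is_cut V E src tgt C \<and> J \<subseteq> C \<and>
     I \<subseteq> (C \<inter> (E - S)) - J \<and> I \<noteq> {}"

definition attack_cost :: "real \<Rightarrow> real \<Rightarrow> real \<Rightarrow> 'e set \<Rightarrow> 'e set \<Rightarrow> 'e set \<Rightarrow> 'e set \<Rightarrow> real" where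
  "attack_cost pJS pJSc pI E S J I =
     pJS * real (card (J \<inter> S)) + pJSc * real (card (J \<inter> (E - S))) + pI * real (card I)"

definition detectable :: "'e set \<Rightarrow> 'e set \<Rightarrow> 'e set \<Rightarrow> bool" where
  "detectable C J I \<longleftrightarrow> 2 * card I > card (C - J)"

definition optimal_detectable_attack ::
  "'v set \<Rightarrow> 'e set \<Rightarrow> ('e \<Rightarrow> 'v) \<Rightarrow> ('e \<Rightarrow> 'v) \<Rightarrow> 'e set \<Rightarrow> real \<Rightarrow> real \<Rightarrow> real
    \<Rightarrow> 'e set \<Rightarrow> 'e set \<Rightarrow> 'e set \<Rightarrow> bool" where
  "optimal_detectable_attack V E src tgt S pJS pJSc pI C J I \<longleftrightarrow>
     gen_attack V E src tgt S C J I \<and> detectable C J I \<and>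
     (\<forall>C' J' I'. gen_attack V E src tgt S C' J' I' \<and> detectable C' J' I' \<longrightarrow>
        attack_cost pJS pJSc pI E S J I \<le> attack_cost pJS pJSc pI E S J' I')"

definition cut_weight :: "real \<Rightarrow> real \<Rightarrow> 'e set \<Rightarrow> 'e set \<Rightarrow> 'e set \<Rightarrow> real" where
  "cut_weight pJS pJSc E S C = pJS * real (card (C \<inter> S)) + pJSc * real (card (C \<inter> (E - S)))"

end

theory Submission
  imports Defs
begin

lemma cut_sub: "is_cut V E src tgt C \<Longrightarrow> C \<subseteq> E"
  unfolding is_cut_def delta_def by auto

theorem theorem7:
  fixes V :: "'v set" and E S :: "'e set" and src tgt :: "'e \<Rightarrow> 'v"
    and pJS pJSc pI :: real and Cstar :: "'e set" and e :: 'e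
  assumes "multigraph V E src tgt"
    and "S \<subseteq> E"
    and "0 < pJSc" and "pJSc \<le> pJS" and "pJS \<le> pI"
    and "pJSc < pI / 2" and "pJS + pJSc < pI"
    and "is_cut V E src tgt Cstar" and "Cstar \<inter> (E - S) \<noteq> {}"
    and "\<forall>C. is_cut V E src tgt C \<and> C \<inter> (E - S) \<noteq> {} \<longrightarrow>
           cut_weight pJS pJSc E S Cstar \<le> cut_weight pJS pJSc E S C"
    and "e \<in> Cstar \<inter> (E - S)"
  shows "optimal_detectable_attack V E src tgt S pJS pJSc pI Cstar (Cstar - {e}) {e}"
proof -
  have finE: "finite E" using assms(1) unfolding multigraph_def by auto
  have CsE: "Cstar \<subseteq> E" using cut_sub assms(8) by blast
  have finC: "finite Cstar" using CsE finE finite_subset by blast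
  have e1: "(Cstar - {e}) \<inter> S = Cstar \<inter> S" using assms(11) by auto
  have e2: "(Cstar - {e}) \<inter> (E - S) = Cstar \<inter> (E - S) - {e}" by auto
  have c2: "card (Cstar \<inter> (E - S) - {e}) = card (Cstar \<inter> (E - S)) - 1"
    using assms(11) finC by simp
  have pos: "card (Cstar \<inter> (E - S)) \<ge> 1" using assms(11) finC
    by (metis One_nat_def Suc_leI card_gt_0_iff empty_iff finite_Int)
  have cost: "attack_cost pJS pJSc pI E S (Cstar - {e}) {e}
      = cut_weight pJS pJSc E S Cstar - pJSc + pI"
    unfolding attack_cost_def cut_weight_def e1 e2 c2 using pos
    by (simp add: of_nat_diff algebra_simps)
  have ga: "gen_attack V E src tgt S Cstar (Cstar - {e}) {e}"
    unfolding gen_attack_def using assms(8,11) by auto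
  have det: "detectable Cstar (Cstar - {e}) {e}"
    unfolding detectable_def using assms(11) by (simp add: Diff_Diff_Int Int_absorb1)
  have opt: "attack_cost pJS pJSc pI E S (Cstar - {e}) {e} \<le> attack_cost pJS pJSc pI E S J' I'"
    if g: "gen_attack V E src tgt S C' J' I'" and d: "detectable C' J' I'" for C' J' I'
  proof -
    have cut: "is_cut V E src tgt C'" and JC: "J' \<subseteq> C'" and IC: "I' \<subseteq> (C' \<inter> (E - S)) - J'"
      and Ine: "I' \<noteq> {}" using g unfolding gen_attack_def by auto
    have C'E: "C' \<subseteq> E" using cut cut_sub by blast
    have finC': "finite C'" using C'E finE finite_subset by blast
    define R where "R = C' - J' - I'"
    define k where "k = card I'"
    have finI: "finite I'" using IC finC' finite_subset by blast
    have finJ: "finite J'" using JC finC' finite_subset by blast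
    have finR: "finite R" unfolding R_def using finC' by simp
    have kpos: "k \<ge> 1" unfolding k_def using Ine finI
      by (metis One_nat_def Suc_leI card_gt_0_iff)
    have s1: "C' \<inter> S = (J' \<inter> S) \<union> (R \<inter> S)" unfolding R_def using IC JC by auto
    have s1c: "card (C' \<inter> S) = card (J' \<inter> S) + card (R \<inter> S)"
      unfolding s1 by (rule card_Un_disjoint) (use finJ finR R_def in auto)
    have s2: "C' \<inter> (E - S) = (J' \<inter> (E - S)) \<union> I' \<union> (R \<inter> (E - S))"
      unfolding R_def using IC JC C'E by auto
    have s2c: "card (C' \<inter> (E - S)) = card (J' \<inter> (E - S)) + k + card (R \<inter> (E - S))"
      unfolding s2 k_def
      by (subst card_Un_disjoint, use finJ finR finI R_def IC in auto)
         (subst card_Un_disjoint, use finJ finR finI R_def IC in auto)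
    have s3: "C' - J' = I' \<union> R" unfolding R_def using IC by auto
    have s3c: "card (C' - J') = k + card R"
      unfolding s3 k_def by (rule card_Un_disjoint) (use finI finR R_def in auto)
    have Rk: "card R + 1 \<le> k" using d s3c unfolding detectable_def k_def by simp
    have RS: "card R = card (R \<inter> S) + card (R \<inter> (E - S))"
    proof -
      have "R = (R \<inter> S) \<union> (R \<inter> (E - S))" unfolding R_def using C'E by auto
      hence "card R = card ((R \<inter> S) \<union> (R \<inter> (E - S)))" by simp
      also have "\<dots> = card (R \<inter> S) + card (R \<inter> (E - S))"
        by (rule card_Un_disjoint) (use finR in auto)
      finally show ?thesis .
    qed
    have w: "cut_weight pJS pJSc E S Cstar \<le> cut_weight pJS pJSc E S C'"
      using assms(10) cut IC Ine by blast
    define a where "a = real (card (J' \<inter> S))"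
    define b where "b = real (card (J' \<inter> (E - S)))"
    define r1 where "r1 = real (card (R \<inter> S))"
    define r2 where "r2 = real (card (R \<inter> (E - S)))"
    have wC': "cut_weight pJS pJSc E S C' = pJS * (a + r1) + pJSc * (b + real k + r2)"
      unfolding cut_weight_def s1c s2c a_def b_def r1_def r2_def by simp
    have cost': "attack_cost pJS pJSc pI E S J' I' = pJS * a + pJSc * b + pI * real k"
      unfolding attack_cost_def a_def b_def k_def by simp
    have Rk': "r1 + r2 + 1 \<le> real k" using Rk RS unfolding r1_def r2_def
      by (metis of_nat_add of_nat_le_iff of_nat_1)
    have r0: "r1 \<ge> 0" "r2 \<ge> 0" unfolding r1_def r2_def by auto
    have "pJSc * r2 \<le> pJS * r2" using r0 assms(4) by (simp add: mult_right_mono)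
    moreover have "pJS * (r1 + r2) \<le> pJS * (real k - 1)"
      using Rk' assms(3,4) by (intro mult_left_mono) auto
    moreover have "0 \<le> (real k - 1) * (pI - pJSc - pJS)"
      using kpos assms(7) by (intro mult_nonneg_nonneg) auto
    ultimately show ?thesis using w unfolding cost cost' wC'
      by (simp add: algebra_simps)
  qed
  show ?thesis unfolding optimal_detectable_attack_def using ga det opt by blast
qed

end
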